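(* Let $\widehat{\zeta}_1,\dots,\widehat{\zeta}_N\in\mathbb{R}$, $\widehat{\mathbb{P}}_N=\frac1N\sum_{i=1}^N\delta_{\widehat{\zeta}_i}$, $\eta\in\mathbb{R}$, $\bar\zeta=\frac1N\sum_{i=1}^N\widehat{\zeta}_i$ and $\widehat\sigma^2=\frac1N\sum_{i=1}^N(\widehat{\zeta}_i-\eta)^2$. Let $\varepsilon>0$ with $\varepsilon^2\ge(\bar\zeta-\eta)^2$. Then $$\sup\Big\{\mathbb{E}_{\mathbb{Q}}[(\zeta-\eta)^2]:\ \mathbb{Q}\in\mathcal{P}_2(\mathbb{R}),\ W_2(\mathbb{Q},\widehat{\mathbb{P}}_N)\le\varepsilon,\ \mathbb{E}_{\mathbb{Q}}[\zeta]=\eta\Big\}=\Big(\sqrt{\widehat\sigma^2-(\bar\zeta-\eta)^2}+\sqrt{\varepsilon^2-(\bar\zeta-\eta)^2}\Big)^2.$$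
   Context: $\mathcal{P}_2(\mathbb{R})$ is the set of Borel probability measures on $\mathbb{R}$ with finite second moment, and $W_2(\mu,\nu)=(\inf_\Pi\int|s-t|^2\,\Pi(ds,dt))^{1/2}$, the infimum over couplings $\Pi$ of $\mu$ and $\nu$. *)

theory Defs
  imports "HOL-Probability.Probability"
begin

definition P2 :: "real measure set" where
  "P2 = {Q. sets Q = sets (borel :: real measure) \<and> prob_space Q \<and> integrable Q (\<lambda>x. x ^ 2)}"

definition couplings :: "real measure \<Rightarrow> real measure \<Rightarrow> (real \<times> real) measure set" where
  "couplings \<mu> \<nu> = {\<pi>. sets \<pi> = sets (borel :: (real \<times> real) measure) \<and> prob_space \<pi> \<and>
      distr \<pi> borel fst = \<mu> \<and> distr \<pi> borel snd = \<nu>}"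

definition W2 :: "real measure \<Rightarrow> real measure \<Rightarrow> real" where
  "W2 \<mu> \<nu> = sqrt (enn2real (INF \<pi>\<in>couplings \<mu> \<nu>. \<integral>\<^sup>+ p. ennreal ((fst p - snd p)^2) \<partial>\<pi>))"

definition empirical :: "(nat \<Rightarrow> real) \<Rightarrow> nat \<Rightarrow> real measure" where
  "empirical \<zeta> N = distr (uniform_measure (count_space UNIV) {0..<N}) borel \<zeta>"

end

theory Submission
  imports Defs
begin


lemma lt_ne: assumes "N \<ge> (1::nat)" shows "{..<N} \<noteq> {}"
proof -
  have "0 \<in> {..<N}" using assms by simp
  then show ?thesis by blast
qed

lemma unif_pmf:
  assumes "N \<ge> 1"
  shows "uniform_measure (count_space UNIV) {0..<N} = measure_pmf (pmf_of_set {..<N::nat})"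
proof (rule measure_eqI)
  show "sets (uniform_measure (count_space UNIV) {0..<N}) = sets (measure_pmf (pmf_of_set {..<N::nat}))"
    by simp
  fix A assume "A \<in> sets (uniform_measure (count_space UNIV) {0..<N})"
  have "0 \<in> {..<N}" using assms by simp
  then have "{..<N} \<noteq> {}" by blast
  then show "emeasure (uniform_measure (count_space UNIV) {0..<N}) A = emeasure (measure_pmf (pmf_of_set {..<N::nat})) A"
    by (simp add: emeasure_pmf_of_set emeasure_count_space_finite lessThan_atLeast0
          ennreal_of_nat_eq_real_of_nat divide_ennreal)
qed

lemma emp_eq:
  assumes "N \<ge> 1"
  shows "empirical \<zeta> N = distr (measure_pmf (pmf_of_set {..<N})) borel \<zeta>"
  unfolding empirical_def unif_pmf[OF assms] ..

lemma emp_sets: "sets (empirical \<zeta> N) = sets borel"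
  unfolding empirical_def by simp

lemma emp_prob: assumes "N \<ge> 1" shows "prob_space (empirical \<zeta> N)"
  unfolding emp_eq[OF assms] by (rule prob_space.prob_space_distr) (auto simp: measure_pmf.prob_space_axioms)

lemma emp_integrable:
  fixes g :: "real \<Rightarrow> real"
  assumes "N \<ge> 1" and [measurable]: "g \<in> borel_measurable borel"
  shows "integrable (empirical \<zeta> N) g"
  unfolding emp_eq[OF assms(1)]
proof (rule iffD2[OF integrable_distr_eq])
  show "integrable (measure_pmf (pmf_of_set {..<N})) (\<lambda>x. g (\<zeta> x))"
    by (rule integrable_measure_pmf_finite) (use lt_ne[OF assms(1)] in auto)
qed auto

lemma emp_integral:
  fixes g :: "real \<Rightarrow> real"
  assumes "N \<ge> 1" and [measurable]: "g \<in> borel_measurable borel"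
  shows "(\<integral>x. g x \<partial>empirical \<zeta> N) = (\<Sum>i<N. g (\<zeta> i)) / N"
proof -
  have "0 \<in> {..<N}" using assms by simp
  then have "{..<N} \<noteq> {}" by blast
  then show ?thesis
  unfolding emp_eq[OF assms(1)]
  by (subst integral_distr) (auto simp: integral_pmf_of_set)
qed

lemma pmf_of_set_times:
  assumes "finite A" "A \<noteq> {}" "finite B" "B \<noteq> {}"
  shows "pmf_of_set (A \<times> B) = pair_pmf (pmf_of_set A) (pmf_of_set B)"
  proof (rule pmf_eqI)
  fix x :: "'a \<times> 'b"
  have ne: "A \<times> B \<noteq> {}" "finite (A \<times> B)" using assms by auto
  show "pmf (pmf_of_set (A \<times> B)) x = pmf (pair_pmf (pmf_of_set A) (pmf_of_set B)) x"
    unfolding pmf_pair pmf_of_set[OF ne] pmf_of_set[OF assms(2,1)] pmf_of_set[OF assms(4,3)]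
    by (cases x) (simp add: card_cartesian_product indicator_def pmf_pair pmf_of_set[OF assms(2,1)] pmf_of_set[OF assms(4,3)])
qed


lemma meas_fst_snd:
  assumes "sets \<pi> = sets (borel :: (real \<times> real) measure)"
  shows "fst \<in> borel_measurable \<pi>" "snd \<in> borel_measurable \<pi>"
  unfolding measurable_cong_sets[OF assms refl] borel_prod[symmetric] by simp_all

lemma coup_fst:
  fixes h :: "real \<Rightarrow> real"
  assumes "\<pi> \<in> couplings Q P" and [measurable]: "h \<in> borel_measurable borel"
  shows "integrable \<pi> (\<lambda>p. h (fst p)) \<longleftrightarrow> integrable Q h"
    and "(\<integral>p. h (fst p) \<partial>\<pi>) = (\<integral>x. h x \<partial>Q)"
proof -
  have s: "sets \<pi> = sets (borel :: (real \<times> real) measure)" and d: "distr \<pi> borel fst = Q"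
    using assms(1) unfolding couplings_def by auto
  note m = meas_fst_snd[OF s]
  show "integrable \<pi> (\<lambda>p. h (fst p)) \<longleftrightarrow> integrable Q h"
    unfolding d[symmetric] by (rule integrable_distr_eq[symmetric]) (use m in auto)
  show "(\<integral>p. h (fst p) \<partial>\<pi>) = (\<integral>x. h x \<partial>Q)"
    unfolding d[symmetric] by (rule integral_distr[symmetric]) (use m in auto)
qed

lemma coup_snd:
  fixes h :: "real \<Rightarrow> real"
  assumes "\<pi> \<in> couplings Q P" and [measurable]: "h \<in> borel_measurable borel"
  shows "integrable \<pi> (\<lambda>p. h (snd p)) \<longleftrightarrow> integrable P h"
    and "(\<integral>p. h (snd p) \<partial>\<pi>) = (\<integral>x. h x \<partial>P)"
proof -
  have s: "sets \<pi> = sets (borel :: (real \<times> real) measure)" and d: "distr \<pi> borel snd = P"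
    using assms(1) unfolding couplings_def by auto
  note m = meas_fst_snd[OF s]
  show "integrable \<pi> (\<lambda>p. h (snd p)) \<longleftrightarrow> integrable P h"
    unfolding d[symmetric] by (rule integrable_distr_eq[symmetric]) (use m in auto)
  show "(\<integral>p. h (snd p) \<partial>\<pi>) = (\<integral>x. h x \<partial>P)"
    unfolding d[symmetric] by (rule integral_distr[symmetric]) (use m in auto)
qed


lemma my_distr_snd:
  assumes "prob_space M1" "prob_space M2"
  shows "distr (M1 \<Otimes>\<^sub>M M2) M2 snd = M2"
proof -
  have ps: "pair_sigma_finite M1 M2" using assms by (simp add: pair_sigma_finite_def prob_space_imp_sigma_finite)
  show ?thesis
  proof (intro measure_eqI)
    fix A assume A: "A \<in> sets (distr (M1 \<Otimes>\<^sub>M M2) M2 snd)"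
    from A have eq: "emeasure (distr (M1 \<Otimes>\<^sub>M M2) M2 snd) A = emeasure (M1 \<Otimes>\<^sub>M M2) (space M1 \<times> A)"
      by (auto simp add: emeasure_distr space_pair_measure dest: sets.sets_into_space intro!: arg_cong2[where f=emeasure])
    show "emeasure (distr (M1 \<Otimes>\<^sub>M M2) M2 snd) A = emeasure M2 A"
    proof -
      have A2: "A \<in> sets M2" using A by simp
      show ?thesis using sigma_finite_measure.emeasure_pair_measure_Times[OF prob_space_imp_sigma_finite[OF assms(2)] sets.top A2, of M1] prob_space.emeasure_space_1[OF assms(1)] eq by simp
    qed
  qed simp
qed

lemma prod_coupling:
  assumes "N \<ge> 1" "Q \<in> P2"
  shows "Q \<Otimes>\<^sub>M empirical \<zeta> N \<in> couplings Q (empirical \<zeta> N)"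
proof -
  have sQ: "sets Q = sets borel" and pQ: "prob_space Q" using assms(2) unfolding P2_def by auto
  have pP: "prob_space (empirical \<zeta> N)" by (rule emp_prob[OF assms(1)])
  interpret pair_prob_space Q "empirical \<zeta> N" using pQ pP
    by (simp add: pair_prob_space_def pair_sigma_finite_def prob_space_imp_sigma_finite)
  have "sets (Q \<Otimes>\<^sub>M empirical \<zeta> N) = sets (borel \<Otimes>\<^sub>M (borel :: real measure))"
    by (rule sets_pair_measure_cong[OF sQ emp_sets])
  also have "\<dots> = sets (borel :: (real \<times> real) measure)" unfolding borel_prod ..
  finally have s: "sets (Q \<Otimes>\<^sub>M empirical \<zeta> N) = sets (borel :: (real \<times> real) measure)" .
  have d1: "distr (Q \<Otimes>\<^sub>M empirical \<zeta> N) borel fst = Q"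
  proof -
    have "distr (Q \<Otimes>\<^sub>M empirical \<zeta> N) borel fst = distr (Q \<Otimes>\<^sub>M empirical \<zeta> N) Q fst"
      by (rule distr_cong) (use sQ in auto)
    also have "\<dots> = Q" by (rule M2.distr_pair_fst)
    finally show ?thesis .
  qed
  have d2: "distr (Q \<Otimes>\<^sub>M empirical \<zeta> N) borel snd = empirical \<zeta> N"
  proof -
    have "distr (Q \<Otimes>\<^sub>M empirical \<zeta> N) borel snd = distr (Q \<Otimes>\<^sub>M empirical \<zeta> N) (empirical \<zeta> N) snd"
      by (rule distr_cong) (use emp_sets in auto)
    also have "\<dots> = empirical \<zeta> N" by (rule my_distr_snd[OF pQ pP])
    finally show ?thesis .
  qed
  show ?thesis unfolding couplings_def using s d1 d2 P.prob_space_axioms by auto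
qed

lemma integrable_diff_sq:
  fixes X Y :: "'a \<Rightarrow> real"
  assumes [measurable]: "X \<in> borel_measurable M" "Y \<in> borel_measurable M"
    and iX: "integrable M (\<lambda>x. X x ^ 2)" and iY: "integrable M (\<lambda>x. Y x ^ 2)"
  shows "integrable M (\<lambda>x. (X x - Y x) ^ 2)"
proof (rule Bochner_Integration.integrable_bound[OF Bochner_Integration.integrable_add[OF integrable_mult_right[OF iX, of 2] integrable_mult_right[OF iY, of 2]]])
  show "(\<lambda>x. (X x - Y x) ^ 2) \<in> borel_measurable M" by measurable
  have "abs ((X x - Y x) ^ 2) \<le> abs (2 * X x ^ 2 + 2 * Y x ^ 2)" for x
  proof -
    have "0 \<le> (X x + Y x)^2" by simp
    then have "(X x - Y x) ^ 2 \<le> 2 * X x ^ 2 + 2 * Y x ^ 2" by (simp add: power2_eq_square algebra_simps)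
    then show ?thesis by simp
  qed
  then show "AE x in M. norm ((X x - Y x) ^ 2) \<le> norm (2 * X x ^ 2 + 2 * Y x ^ 2)" by auto
qed

lemma var_id:
  fixes \<zeta> :: "nat \<Rightarrow> real"
  assumes "N \<ge> 1"
  shows "(\<Sum>i<N. (\<zeta> i - (\<Sum>j<N. \<zeta> j) / N)^2) / N = (\<Sum>i<N. (\<zeta> i - \<eta>)^2) / N - ((\<Sum>i<N. \<zeta> i) / N - \<eta>)^2"
proof -
  define m where "m = (\<Sum>j<N. \<zeta> j) / N"
  define k where "k = m - \<eta>"
  have Npos: "real N > 0" using assms by simp
  have pw: "(\<zeta> i - m)^2 = (\<zeta> i - \<eta>)^2 - 2*k*(\<zeta> i - \<eta>) + k^2" for i
    by (simp add: k_def power2_eq_square algebra_simps)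
  have "(\<Sum>i<N. (\<zeta> i - m)^2) = (\<Sum>i<N. (\<zeta> i - \<eta>)^2) - 2*k*(\<Sum>i<N. (\<zeta> i - \<eta>)) + N * k^2"
  proof -
    have "(\<Sum>i<N. 2*k*(\<zeta> i - \<eta>)) = 2*k*(\<Sum>i<N. (\<zeta> i - \<eta>))" by (rule sum_distrib_left[symmetric])
    then show ?thesis unfolding pw by (simp add: sum.distrib sum_subtractf del: sum_distrib_left)
  qed
  also have "(\<Sum>i<N. (\<zeta> i - \<eta>)) = N * k"
    using Npos by (simp add: sum_subtractf k_def m_def field_simps)
  finally have "(\<Sum>i<N. (\<zeta> i - m)^2) = (\<Sum>i<N. (\<zeta> i - \<eta>)^2) - N * k^2"
    by (simp add: power2_eq_square algebra_simps)
  then show ?thesis unfolding m_def[symmetric] k_def[symmetric] using Npos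
    by (simp add: field_simps)
qed

lemma cs_aux:
  fixes e a c :: real
  assumes a: "a \<ge> 0" and c: "c \<ge> 0" and h: "\<And>l. l > 0 \<Longrightarrow> 2*e \<le> l*a^2 + c^2/l"
  shows "e \<le> a*c"
proof (cases "a > 0 \<and> c > 0")
  case True
  have "2*e \<le> (c/a)*a^2 + c^2/(c/a)" using h[of "c/a"] True by simp
  also have "\<dots> = 2*a*c" using True by (simp add: field_simps power2_eq_square)
  finally show ?thesis by simp
next
  case False
  show ?thesis
  proof (rule ccontr)
    assume ne: "\<not> e \<le> a*c"
    from False a c have z: "a = 0 \<or> c = 0" by auto
    then have "e > 0" using ne by auto
    show False
    proof (cases "c = 0")
      case True
      have "a^2+1 > 0" by (smt (verit) zero_le_power2)
      then have lp: "e/(a^2+1) > 0" using \<open>e>0\<close> by (simp add: divide_pos_pos)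
      have "2*e \<le> (e/(a^2+1))*a^2" using h[OF lp] True by simp
      also have "\<dots> = e * (a^2/(a^2+1))" by simp
      also have "\<dots> < e * 1"
        by (rule mult_strict_left_mono) (use \<open>a^2+1>0\<close> \<open>e>0\<close> in auto)
      finally show False using \<open>e>0\<close> by simp
    next
      case False
      then have a0: "a = 0" using z by simp
      have "c^2+1 > 0" by (smt (verit) zero_le_power2)
      then have lp: "(c^2+1)/e > 0" using \<open>e>0\<close> by (simp add: divide_pos_pos)
      have "2*e \<le> c^2/((c^2+1)/e)" using h[OF lp] a0 by simp
      also have "\<dots> = c^2*e/(c^2+1)" by simp
      also have "\<dots> = e * (c^2/(c^2+1))" by simp
      also have "\<dots> < e * 1"
        by (rule mult_strict_left_mono) (use \<open>c^2+1>0\<close> \<open>e>0\<close> in auto)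
      finally show False using \<open>e>0\<close> by simp
    qed
  qed
qed

lemma abs_mult_le_sq: fixes u v :: real shows "abs (u * v) \<le> u^2 + v^2"
proof -
  have "0 \<le> (\<bar>u\<bar> - \<bar>v\<bar>)^2" by simp
  then have "2*(\<bar>u\<bar>*\<bar>v\<bar>) \<le> \<bar>u\<bar>*\<bar>u\<bar> + \<bar>v\<bar>*\<bar>v\<bar>" by (simp add: power2_eq_square algebra_simps)
  moreover have "0 \<le> \<bar>u\<bar>*\<bar>v\<bar>" by simp
  moreover have "abs (u * v) = \<bar>u\<bar>*\<bar>v\<bar>" "u^2 = \<bar>u\<bar>*\<bar>u\<bar>" "v^2 = \<bar>v\<bar>*\<bar>v\<bar>"
    by (simp_all add: abs_mult power2_eq_square)
  ultimately show ?thesis by linarith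
qed

lemma core_ub:
  fixes X Y :: "'a \<Rightarrow> real"
  assumes P: "prob_space M"
    and [measurable]: "X \<in> borel_measurable M" "Y \<in> borel_measurable M"
    and iX: "integrable M (\<lambda>x. X x ^ 2)" and iY: "integrable M (\<lambda>x. Y x ^ 2)"
    and eX: "(\<integral>x. X x \<partial>M) = \<eta>" and eY: "(\<integral>x. Y x \<partial>M) = m"
  shows "(\<integral>x. (X x - \<eta>)^2 \<partial>M) \<le> (sqrt (\<integral>x. (Y x - m)^2 \<partial>M) + sqrt ((\<integral>x. (X x - Y x)^2 \<partial>M) - (\<eta> - m)^2))^2"
    and "0 \<le> (\<integral>x. (X x - Y x)^2 \<partial>M) - (\<eta> - m)^2"
proof -
  interpret prob_space M by fact
  have iX1: "integrable M X" by (rule square_integrable_imp_integrable) (use iX in auto)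
  have iY1: "integrable M Y" by (rule square_integrable_imp_integrable) (use iY in auto)
  have iXY: "integrable M (\<lambda>x. X x * Y x)"
  proof (rule Bochner_Integration.integrable_bound[OF Bochner_Integration.integrable_add[OF iX iY]])
    show "(\<lambda>x. X x * Y x) \<in> borel_measurable M" by measurable
    have "abs (X x * Y x) \<le> abs (X x ^ 2 + Y x ^ 2)" for x
      using abs_mult_le_sq[of "X x" "Y x"] by simp
    then show "AE x in M. norm (X x * Y x) \<le> norm (X x ^ 2 + Y x ^ 2)" by auto
  qed
  define B where "B x = Y x - m" for x
  define C where "C x = X x - Y x - (\<eta> - m)" for x
  have iB2: "integrable M (\<lambda>x. B x ^ 2)"
    unfolding B_def power2_diff using iY iY1 by simp
  have iC2: "integrable M (\<lambda>x. C x ^ 2)"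
  proof -
    have e: "C x ^ 2 = X x ^ 2 + Y x ^ 2 - 2 * (X x * Y x) - 2*(\<eta> - m) * X x + 2*(\<eta> - m) * Y x + (\<eta> - m)^2" for x
      unfolding C_def by (simp add: power2_eq_square algebra_simps)
    show ?thesis unfolding e using iX iY iX1 iY1 iXY by simp
  qed
  have iBC: "integrable M (\<lambda>x. B x * C x)"
  proof -
    have e: "B x * C x = X x * Y x - Y x ^ 2 - (\<eta> - m) * Y x - m * X x + m * Y x + m * (\<eta> - m)" for x
      unfolding C_def B_def by (simp add: power2_eq_square algebra_simps)
    show ?thesis unfolding e using iX iY iX1 iY1 iXY by simp
  qed
  have EB: "(\<integral>x. B x \<partial>M) = 0" unfolding B_def using iY1 eY by (simp add: prob_space)
  have EC: "(\<integral>x. C x \<partial>M) = 0" unfolding C_def using iY1 iX1 eY eX by (simp add: prob_space)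
  define a where "a = sqrt (\<integral>x. B x ^ 2 \<partial>M)"
  define c where "c = sqrt (\<integral>x. C x ^ 2 \<partial>M)"
  have a2: "a^2 = (\<integral>x. B x ^ 2 \<partial>M)" unfolding a_def by simp
  have c2: "c^2 = (\<integral>x. C x ^ 2 \<partial>M)" unfolding c_def by simp
  have "(\<integral>x. B x * C x \<partial>M) \<le> a * c"
  proof (rule cs_aux)
    show "a \<ge> 0" "c \<ge> 0" unfolding a_def c_def by auto
    fix l :: real assume l: "l > 0"
    have pw: "2 * (B x * C x) \<le> l * B x ^ 2 + C x ^ 2 / l" for x
    proof -
      have "l * B x ^ 2 + C x ^ 2 / l - 2 * (B x * C x) = (l * B x - C x)^2 / l" using l
        by (simp add: field_simps power2_eq_square)
      moreover have "(l * B x - C x)^2 / l \<ge> 0" using l by simp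
      ultimately show ?thesis by linarith
    qed
    have "2 * (\<integral>x. B x * C x \<partial>M) = (\<integral>x. 2 * (B x * C x) \<partial>M)" by simp
    also have "\<dots> \<le> (\<integral>x. l * B x ^ 2 + C x ^ 2 / l \<partial>M)"
      by (rule integral_mono) (use iBC iB2 iC2 pw in auto)
    also have "\<dots> = l * a^2 + c^2 / l" using iB2 iC2 a2 c2 by simp
    finally show "2 * (\<integral>x. B x * C x \<partial>M) \<le> l * a^2 + c^2 / l" .
  qed
  have "(\<integral>x. (X x - \<eta>)^2 \<partial>M) = (\<integral>x. B x ^ 2 + 2 * (B x * C x) + C x ^ 2 \<partial>M)"
    by (rule Bochner_Integration.integral_cong) (auto simp: B_def C_def power2_eq_square algebra_simps)
  also have "\<dots> = a^2 + 2 * (\<integral>x. B x * C x \<partial>M) + c^2" using iB2 iC2 iBC a2 c2 by simp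
  also have "\<dots> \<le> a^2 + 2*a*c + c^2" using \<open>(\<integral>x. B x * C x \<partial>M) \<le> a * c\<close> by simp
  also have "\<dots> = (a + c)^2" by (simp add: power2_eq_square algebra_simps)
  finally have main: "(\<integral>x. (X x - \<eta>)^2 \<partial>M) \<le> (a + c)^2" .
  define D where "D x = X x - Y x" for x
  have iD: "integrable M D" unfolding D_def using iX1 iY1 by simp
  have ED: "(\<integral>x. D x \<partial>M) = \<eta> - m" unfolding D_def using iX1 iY1 eX eY by simp
  have iD2: "integrable M (\<lambda>x. D x ^ 2)"
  proof -
    have e: "D x ^ 2 = X x ^ 2 + Y x ^ 2 - 2 * (X x * Y x)" for x
      unfolding D_def by (simp add: power2_eq_square algebra_simps)
    show ?thesis unfolding e using iX iY iXY by simp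
  qed
  have "(\<integral>x. C x ^ 2 \<partial>M) = (\<integral>x. D x ^ 2 - 2*(\<eta> - m) * D x + (\<eta> - m)^2 \<partial>M)"
    by (rule Bochner_Integration.integral_cong) (auto simp: C_def D_def power2_eq_square algebra_simps)
  also have "\<dots> = (\<integral>x. D x ^ 2 \<partial>M) - 2*(\<eta> - m) * (\<integral>x. D x \<partial>M) + (\<eta> - m)^2"
    using iD iD2 by (simp add: prob_space)
  also have "\<dots> = (\<integral>x. D x ^ 2 \<partial>M) - (\<eta> - m)^2"
    unfolding ED by (simp add: power2_eq_square)
  finally have cc: "(\<integral>x. C x ^ 2 \<partial>M) = (\<integral>x. D x ^ 2 \<partial>M) - (\<eta> - m)^2" .
  have "c = sqrt ((\<integral>x. (X x - Y x)^2 \<partial>M) - (\<eta> - m)^2)" unfolding c_def cc D_def ..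
  moreover have "a = sqrt (\<integral>x. (Y x - m)^2 \<partial>M)" unfolding a_def B_def ..
  ultimately show "(\<integral>x. (X x - \<eta>)^2 \<partial>M) \<le> (sqrt (\<integral>x. (Y x - m)^2 \<partial>M) + sqrt ((\<integral>x. (X x - Y x)^2 \<partial>M) - (\<eta> - m)^2))^2" using main by simp
  have "0 \<le> (\<integral>x. C x ^ 2 \<partial>M)" by simp
  then show "0 \<le> (\<integral>x. (X x - Y x)^2 \<partial>M) - (\<eta> - m)^2" using cc unfolding D_def by simp
qed


lemma ub:
  fixes \<zeta> :: "nat \<Rightarrow> real" and N :: nat and \<eta> \<epsilon> :: real
  assumes N1: "N \<ge> 1" and ep: "\<epsilon> > 0"
    and dle: "\<epsilon>^2 \<ge> ((\<Sum>i<N. \<zeta> i) / N - \<eta>)^2"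
    and Q: "Q \<in> P2" and W: "W2 Q (empirical \<zeta> N) \<le> \<epsilon>" and EQ: "(\<integral>x. x \<partial>Q) = \<eta>"
  shows "(\<integral>x. (x - \<eta>)^2 \<partial>Q) \<le> (sqrt ((\<Sum>i<N. (\<zeta> i - \<eta>)^2) / N - ((\<Sum>i<N. \<zeta> i) / N - \<eta>)^2)
                 + sqrt (\<epsilon>^2 - ((\<Sum>i<N. \<zeta> i) / N - \<eta>)^2))^2"
proof -
  define P where "P = empirical \<zeta> N"
  define m where "m = (\<Sum>i<N. \<zeta> i) / N"
  define d2 where "d2 = ((\<Sum>i<N. \<zeta> i) / N - \<eta>)^2"
  define s where "s = sqrt ((\<Sum>i<N. (\<zeta> i - \<eta>)^2) / N - d2)"
  define r where "r = sqrt (\<epsilon>^2 - d2)"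
  define V where "V = (\<integral>x. (x - \<eta>)^2 \<partial>Q)"
  define c where "c \<pi> = (\<integral>p. (fst p - snd p)^2 \<partial>\<pi>)" for \<pi> :: "(real \<times> real) measure"
  have iQ: "integrable Q (\<lambda>x. x^2)" using Q unfolding P2_def by auto
  have dd: "(\<Sum>i<N. (\<zeta> i - \<eta>)^2) / N - d2 \<ge> 0"
    unfolding d2_def var_id[OF N1, of \<zeta> \<eta>, symmetric] by (simp add: sum_nonneg)
  have de: "\<epsilon>^2 - d2 \<ge> 0" using dle unfolding d2_def by simp
  have s_ge: "s \<ge> 0" "r \<ge> 0" unfolding s_def r_def using dd de by auto
  have varP: "(\<integral>x. (x - m)^2 \<partial>P) = (\<Sum>i<N. (\<zeta> i - \<eta>)^2) / N - d2"
    unfolding P_def using emp_integral[OF N1, of "\<lambda>x. (x - m)^2" \<zeta>] var_id[OF N1, of \<zeta> \<eta>]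
    by (simp add: m_def d2_def)
  have EP: "(\<integral>x. x \<partial>P) = m"
    unfolding P_def using emp_integral[OF N1, of "\<lambda>x. x" \<zeta>] by (simp add: m_def)
  have key: "(V \<le> (s + sqrt (c \<pi> - d2))^2 \<and> c \<pi> - d2 \<ge> 0) \<and> (\<integral>\<^sup>+ p. ennreal ((fst p - snd p)^2) \<partial>\<pi>) = ennreal (c \<pi>)"
    if \<pi>: "\<pi> \<in> couplings Q P" for \<pi>
  proof
    have sp: "sets \<pi> = sets (borel :: (real \<times> real) measure)" and pp: "prob_space \<pi>"
      using \<pi> unfolding couplings_def by auto
    note mfs = meas_fst_snd[OF sp]
    have bm: "(\<lambda>x::real. x^2) \<in> borel_measurable borel" by measurable
    have i1: "integrable \<pi> (\<lambda>p. (fst p)^2)" using coup_fst(1)[OF \<pi> bm] iQ by blast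
    have iP: "integrable P (\<lambda>x. x^2)" unfolding P_def by (rule emp_integrable[OF N1 bm])
    have i2: "integrable \<pi> (\<lambda>p. (snd p)^2)" using coup_snd(1)[OF \<pi> bm] iP by blast
    have e1: "(\<integral>p. fst p \<partial>\<pi>) = \<eta>" using coup_fst(2)[OF \<pi>, of "\<lambda>x. x"] EQ by simp
    have e2: "(\<integral>p. snd p \<partial>\<pi>) = m" using coup_snd(2)[OF \<pi>, of "\<lambda>x. x"] EP by simp
    have e3: "(\<integral>p. (fst p - \<eta>)^2 \<partial>\<pi>) = V" using coup_fst(2)[OF \<pi>, of "\<lambda>x. (x - \<eta>)^2"] V_def by simp
    have e4: "(\<integral>p. (snd p - m)^2 \<partial>\<pi>) = (\<Sum>i<N. (\<zeta> i - \<eta>)^2) / N - d2"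
      using coup_snd(2)[OF \<pi>, of "\<lambda>x. (x - m)^2"] varP by simp
    have hV: "V \<le> (sqrt (\<integral>p. (snd p - m)^2 \<partial>\<pi>) + sqrt ((\<integral>p. (fst p - snd p)^2 \<partial>\<pi>) - (\<eta> - m)^2))^2"
      unfolding e3[symmetric] by (rule core_ub(1)[OF pp mfs i1 i2 e1 e2])
    have h0: "0 \<le> (\<integral>p. (fst p - snd p)^2 \<partial>\<pi>) - (\<eta> - m)^2" by (rule core_ub(2)[OF pp mfs i1 i2 e1 e2])
    have km: "(\<eta> - m)^2 = d2" unfolding d2_def m_def by (simp add: power2_commute)
    show "V \<le> (s + sqrt (c \<pi> - d2))^2 \<and> c \<pi> - d2 \<ge> 0" using hV h0 unfolding e4 km s_def c_def by blast
    have i3: "integrable \<pi> (\<lambda>p. (fst p - snd p)^2)" by (rule integrable_diff_sq[OF mfs i1 i2])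
    show "(\<integral>\<^sup>+ p. ennreal ((fst p - snd p)^2) \<partial>\<pi>) = ennreal (c \<pi>)"
      unfolding c_def by (rule nn_integral_eq_integral[OF i3]) auto
  qed
  define I where "I = (INF \<pi>\<in>couplings Q P. \<integral>\<^sup>+ p. ennreal ((fst p - snd p)^2) \<partial>\<pi>)"
  have \<pi>0: "Q \<Otimes>\<^sub>M P \<in> couplings Q P" unfolding P_def by (rule prod_coupling[OF N1 Q])
  have "I \<le> (\<integral>\<^sup>+ p. ennreal ((fst p - snd p)^2) \<partial>(Q \<Otimes>\<^sub>M P))"
    unfolding I_def by (rule INF_lower[OF \<pi>0])
  also have "\<dots> = ennreal (c (Q \<Otimes>\<^sub>M P))" using key[OF \<pi>0] by blast
  also have "\<dots> < top" by simp
  finally have Ifin: "I < top" .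
  have W': "sqrt (enn2real I) \<le> \<epsilon>" using W unfolding W2_def I_def P_def .
  have "enn2real I = (sqrt (enn2real I))^2" by simp
  also have "\<dots> \<le> \<epsilon>^2" by (rule power_mono[OF W']) simp
  finally have "enn2real I \<le> \<epsilon>^2" .
  then have Ile: "I \<le> ennreal (\<epsilon>^2)" using ennreal_enn2real[OF Ifin] ennreal_leI by metis
  have V0: "V \<ge> 0" unfolding V_def by simp
  have bound: "sqrt V \<le> s + r + u" if u: "u > 0" for u
  proof -
    have "I < ennreal (\<epsilon>^2 + u^2)"
      using Ile ennreal_lessI[of "\<epsilon>^2 + u^2" "\<epsilon>^2"] u ep by (simp add: add_pos_pos order.strict_trans1)
    then obtain \<pi> where \<pi>: "\<pi> \<in> couplings Q P" and lt: "(\<integral>\<^sup>+ p. ennreal ((fst p - snd p)^2) \<partial>\<pi>) < ennreal (\<epsilon>^2 + u^2)"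
      unfolding I_def by (auto simp: INF_less_iff)
    have c0: "c \<pi> \<ge> 0" unfolding c_def by simp
    have "ennreal (c \<pi>) < ennreal (\<epsilon>^2 + u^2)" using lt key[OF \<pi>] by simp
    then have clt: "c \<pi> < \<epsilon>^2 + u^2" using ennreal_less_iff[OF c0] by blast
    have "sqrt (c \<pi> - d2) \<le> sqrt ((r + u)^2)"
    proof (rule real_sqrt_le_mono)
      have "r^2 = \<epsilon>^2 - d2" unfolding r_def using de by simp
      moreover have "0 \<le> r * u" using s_ge u by simp
      ultimately show "c \<pi> - d2 \<le> (r + u)^2" using clt by (simp add: power2_eq_square algebra_simps)
    qed
    also have "\<dots> = r + u" using s_ge u by simp
    finally have "s + sqrt (c \<pi> - d2) \<le> s + r + u" by simp
    moreover have "0 \<le> s + sqrt (c \<pi> - d2)"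
    proof -
      have "c \<pi> - d2 \<ge> 0"
        using key[OF \<pi>] by blast
      then show ?thesis using s_ge by simp
    qed
    ultimately have "(s + sqrt (c \<pi> - d2))^2 \<le> (s + r + u)^2" by (rule power_mono)
    then have "V \<le> (s + r + u)^2" using key[OF \<pi>] by linarith
    then have "sqrt V \<le> sqrt ((s + r + u)^2)" by (rule real_sqrt_le_mono)
    also have "\<dots> = s + r + u" using s_ge u by simp
    finally show ?thesis .
  qed
  have "sqrt V \<le> s + r" by (rule field_le_epsilon) (rule bound)
  then have "(sqrt V)^2 \<le> (s + r)^2" by (rule power_mono) (simp add: V0)
  then have "V \<le> (s + r)^2" using V0 by simp
  then show ?thesis unfolding V_def s_def r_def d2_def .
qed
lemma sum_bool_prod:
  "(\<Sum>p\<in>A \<times> (UNIV::bool set). f p) = (\<Sum>i\<in>A. f (i,True) + f (i,False))"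
proof -
  have "(\<Sum>i\<in>A. \<Sum>b\<in>(UNIV::bool set). f (i,b)) = (\<Sum>p\<in>A \<times> UNIV. f p)"
    by (simp add: sum.cartesian_product)
  then show ?thesis by (simp add: UNIV_bool add.commute)
qed

lemma lb_sums:
  fixes \<zeta> :: "nat \<Rightarrow> real" and a t \<eta> :: real
  assumes N1: "N \<ge> 1"
  defines "m \<equiv> (\<Sum>i<N. \<zeta> i) / N"
  defines "v \<equiv> (\<Sum>i<N. (\<zeta> i - m)^2) / N"
  defines "X \<equiv> (\<lambda>p::nat\<times>bool. \<eta> + a * (\<zeta> (fst p) - m) + (if snd p then t else - t))"
  shows "(\<Sum>p\<in>{..<N} \<times> UNIV. X p) = 2 * N * \<eta>"
    and "(\<Sum>p\<in>{..<N} \<times> UNIV. (X p - \<eta>)^2) = 2 * N * (a^2 * v + t^2)"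
    and "(\<Sum>p\<in>{..<N} \<times> UNIV. (X p - \<zeta> (fst p))^2) = 2 * N * ((a - 1)^2 * v + (m - \<eta>)^2 + t^2)"
proof -
  have Npos: "real N > 0" using N1 by simp
  have c0: "(\<Sum>i<N. (\<zeta> i - m)) = 0" using Npos by (simp add: sum_subtractf m_def)
  have cv: "(\<Sum>i<N. (\<zeta> i - m)^2) = N * v" using Npos by (simp add: v_def)
  have "(\<Sum>p\<in>{..<N} \<times> UNIV. X p) = (\<Sum>i<N. 2 * \<eta> + 2 * a * (\<zeta> i - m))"
    unfolding sum_bool_prod X_def by (simp add: algebra_simps)
  also have "\<dots> = 2 * N * \<eta> + 2 * a * (\<Sum>i<N. (\<zeta> i - m))"
    by (simp add: sum.distrib sum_distrib_left[symmetric])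
  finally show "(\<Sum>p\<in>{..<N} \<times> UNIV. X p) = 2 * real N * \<eta>" using c0 by simp
  have "(\<Sum>p\<in>{..<N} \<times> UNIV. (X p - \<eta>)^2) = (\<Sum>i<N. 2 * a^2 * (\<zeta> i - m)^2 + 2 * t^2)"
    unfolding sum_bool_prod X_def by (simp add: power2_eq_square algebra_simps)
  also have "\<dots> = 2 * a^2 * (\<Sum>i<N. (\<zeta> i - m)^2) + 2 * N * t^2"
    by (simp add: sum.distrib sum_distrib_left[symmetric])
  finally show "(\<Sum>p\<in>{..<N} \<times> UNIV. (X p - \<eta>)^2) = 2 * real N * (a^2 * v + t^2)"
    using cv by (simp add: algebra_simps)
  have "(\<Sum>p\<in>{..<N} \<times> UNIV. (X p - \<zeta> (fst p))^2) =
      (\<Sum>i<N. 2 * (a - 1)^2 * (\<zeta> i - m)^2 + (- 4 * (a - 1) * (m - \<eta>)) * (\<zeta> i - m) + (2 * (m - \<eta>)^2 + 2 * t^2))"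
    unfolding sum_bool_prod X_def by (simp add: power2_eq_square algebra_simps)
  also have "\<dots> = 2 * (a - 1)^2 * (\<Sum>i<N. (\<zeta> i - m)^2) + (- 4 * (a - 1) * (m - \<eta>)) * (\<Sum>i<N. (\<zeta> i - m))
      + N * (2 * (m - \<eta>)^2 + 2 * t^2)"
    by (simp add: sum.distrib sum_distrib_left[symmetric])
  finally show "(\<Sum>p\<in>{..<N} \<times> UNIV. (X p - \<zeta> (fst p))^2) = 2 * real N * ((a - 1)^2 * v + (m - \<eta>)^2 + t^2)"
    using cv c0 by (simp add: algebra_simps)
qed


lemma lb:
  fixes \<zeta> :: "nat \<Rightarrow> real" and N :: nat and \<eta> \<epsilon> :: real
  assumes N1: "N \<ge> 1" and ep: "\<epsilon> > 0"
    and dle: "\<epsilon>^2 \<ge> ((\<Sum>i<N. \<zeta> i) / N - \<eta>)^2"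
  shows "\<exists>Q. Q \<in> P2 \<and> W2 Q (empirical \<zeta> N) \<le> \<epsilon> \<and> (\<integral>x. x \<partial>Q) = \<eta> \<and>
     (\<integral>x. (x - \<eta>)^2 \<partial>Q) = (sqrt ((\<Sum>i<N. (\<zeta> i - \<eta>)^2) / N - ((\<Sum>i<N. \<zeta> i) / N - \<eta>)^2)
                 + sqrt (\<epsilon>^2 - ((\<Sum>i<N. \<zeta> i) / N - \<eta>)^2))^2"
proof -
  define m where "m = (\<Sum>i<N. \<zeta> i) / N"
  define d2 where "d2 = ((\<Sum>i<N. \<zeta> i) / N - \<eta>)^2"
  define v where "v = (\<Sum>i<N. (\<zeta> i - m)^2) / N"
  define s where "s = sqrt v"
  define r where "r = sqrt (\<epsilon>^2 - d2)"
  have Npos: "real N > 0" using N1 by simp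
  have vid: "v = (\<Sum>i<N. (\<zeta> i - \<eta>)^2) / N - d2"
    unfolding v_def m_def d2_def by (rule var_id[OF N1])
  have v0: "v \<ge> 0" unfolding v_def using Npos by (simp add: sum_nonneg)
  have de: "\<epsilon>^2 - d2 \<ge> 0" using dle unfolding d2_def by simp
  have s2: "s^2 = v" unfolding s_def using v0 by simp
  have r2: "r^2 = \<epsilon>^2 - d2" unfolding r_def using de by simp
  have s0: "s \<ge> 0" and r0: "r \<ge> 0" unfolding s_def r_def using v0 de by auto
  obtain a t where h1: "a^2 * v + t^2 = (s + r)^2" and h2: "(a - 1)^2 * v + t^2 = r^2"
  proof (cases "s > 0")
    case True
    show ?thesis
    proof (rule that[of "1 + r / s" 0])
      show "(1 + r / s)^2 * v + 0^2 = (s + r)^2" unfolding s2[symmetric] using True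
        by (simp add: field_simps power2_eq_square)
      show "(1 + r / s - 1)^2 * v + 0^2 = r^2" unfolding s2[symmetric] using True
        by (simp add: field_simps power2_eq_square)
    qed
  next
    case False
    then have "s = 0" using s0 by simp
    then have "v = 0" using s2 by simp
    show ?thesis by (rule that[of 1 r]) (simp_all add: \<open>v = 0\<close> \<open>s = 0\<close>)
  qed
  define A where "A = {..<N} \<times> (UNIV :: bool set)"
  have Afin: "finite A" and Ane: "A \<noteq> {}" unfolding A_def using lt_ne[OF N1] by auto
  have cardA: "real (card A) = 2 * real N" unfolding A_def by (simp add: card_cartesian_product)
  define M0 where "M0 = measure_pmf (pmf_of_set A)"
  define X where "X = (\<lambda>p::nat\<times>bool. \<eta> + a * (\<zeta> (fst p) - m) + (if snd p then t else - t))"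
  have sums: "(\<Sum>p\<in>A. X p) = 2 * real N * \<eta>"
      "(\<Sum>p\<in>A. (X p - \<eta>)^2) = 2 * real N * (a^2 * v + t^2)"
      "(\<Sum>p\<in>A. (X p - \<zeta> (fst p))^2) = 2 * real N * ((a - 1)^2 * v + (m - \<eta>)^2 + t^2)"
    using lb_sums[OF N1, where \<eta>=\<eta> and a=a and t=t and \<zeta>=\<zeta>] unfolding A_def X_def v_def m_def by simp_all
  have intM: "(\<integral>p. f p \<partial>M0) = (\<Sum>p\<in>A. f p) / (2 * real N)" for f :: "nat \<times> bool \<Rightarrow> real"
    unfolding M0_def using integral_pmf_of_set[OF Ane Afin, of f] cardA by simp
  have iM: "integrable M0 f" for f :: "nat \<times> bool \<Rightarrow> real"
    unfolding M0_def by (rule integrable_measure_pmf_finite) (simp add: Afin Ane)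
  define Q where "Q = distr M0 borel X"
  define \<pi> where "\<pi> = distr M0 borel (\<lambda>p. (X p, \<zeta> (fst p)))"
  have pM0: "prob_space M0" unfolding M0_def by (rule measure_pmf.prob_space_axioms)
  have mX: "X \<in> measurable M0 borel" unfolding M0_def by simp
  have mXY: "(\<lambda>p. (X p, \<zeta> (fst p))) \<in> measurable M0 borel" unfolding M0_def by simp
  have EQ: "(\<integral>x. x \<partial>Q) = \<eta>"
  proof -
    have "(\<integral>x. x \<partial>Q) = (\<integral>p. X p \<partial>M0)" unfolding Q_def by (rule integral_distr[OF mX]) simp
    also have "\<dots> = \<eta>" unfolding intM sums(1) using Npos by simp
    finally show ?thesis .
  qed
  have VQ: "(\<integral>x. (x - \<eta>)^2 \<partial>Q) = (s + r)^2"
  proof -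
    have "(\<integral>x. (x - \<eta>)^2 \<partial>Q) = (\<integral>p. (X p - \<eta>)^2 \<partial>M0)"
      unfolding Q_def by (rule integral_distr[OF mX]) simp
    also have "\<dots> = a^2 * v + t^2" unfolding intM sums(2) using Npos by simp
    finally show ?thesis using h1 by simp
  qed
  have QP2: "Q \<in> P2"
  proof -
    have "integrable Q (\<lambda>x. x^2)" unfolding Q_def
      by (rule iffD2[OF integrable_distr_eq[OF mX]]) (simp_all add: iM)
    moreover have "prob_space Q" unfolding Q_def by (rule prob_space.prob_space_distr[OF pM0 mX])
    ultimately show ?thesis unfolding P2_def Q_def by simp
  qed
  have sp: "sets \<pi> = sets (borel :: (real \<times> real) measure)" unfolding \<pi>_def by simp
  note mfs = meas_fst_snd[OF refl]
  have d1: "distr \<pi> borel fst = Q"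
    unfolding \<pi>_def Q_def by (subst distr_distr[OF mfs(1) mXY]) (simp add: comp_def X_def)
  have d2': "distr \<pi> borel snd = empirical \<zeta> N"
  proof -
    have "distr \<pi> borel snd = distr M0 borel (\<lambda>p. \<zeta> (fst p))"
      unfolding \<pi>_def by (subst distr_distr[OF mfs(2) mXY]) (simp add: comp_def)
    also have "\<dots> = distr (distr M0 (count_space UNIV) fst) borel \<zeta>"
      by (subst distr_distr) (simp_all add: M0_def comp_def)
    also have "distr M0 (count_space UNIV) fst = measure_pmf (pmf_of_set {..<N})"
    proof -
      have "pmf_of_set A = pair_pmf (pmf_of_set {..<N}) (pmf_of_set UNIV)"
        unfolding A_def by (rule pmf_of_set_times) (use lt_ne[OF N1] in auto)
      then have "map_pmf fst (pmf_of_set A) = pmf_of_set {..<N}" by (simp add: map_fst_pair_pmf)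
      then show ?thesis unfolding M0_def map_pmf_rep_eq[symmetric] by simp
    qed
    finally show ?thesis unfolding emp_eq[OF N1] .
  qed
  have coup: "\<pi> \<in> couplings Q (empirical \<zeta> N)"
    unfolding couplings_def using sp d1 d2' prob_space.prob_space_distr[OF pM0 mXY] \<pi>_def by auto
  have cost: "(\<integral>\<^sup>+ p. ennreal ((fst p - snd p)^2) \<partial>\<pi>) = ennreal (\<epsilon>^2)"
  proof -
    have "(\<integral>\<^sup>+ p. ennreal ((fst p - snd p)^2) \<partial>\<pi>) = (\<integral>\<^sup>+ p. ennreal ((X p - \<zeta> (fst p))^2) \<partial>M0)"
    proof -
      have mc: "(\<lambda>p::real\<times>real. ennreal ((fst p - snd p)^2)) \<in> borel_measurable borel"
        unfolding borel_prod[symmetric] by measurable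
      show ?thesis unfolding \<pi>_def by (subst nn_integral_distr[OF mXY]) (simp_all add: mc)
    qed
    also have "\<dots> = ennreal (\<integral>p. (X p - \<zeta> (fst p))^2 \<partial>M0)"
      by (rule nn_integral_eq_integral[OF iM]) simp
    also have "(\<integral>p. (X p - \<zeta> (fst p))^2 \<partial>M0) = (a - 1)^2 * v + (m - \<eta>)^2 + t^2"
      unfolding intM sums(3) using Npos by simp
    also have "\<dots> = \<epsilon>^2" using h2 r2 unfolding d2_def m_def by simp
    finally show ?thesis .
  qed
  have W: "W2 Q (empirical \<zeta> N) \<le> \<epsilon>"
  proof -
    have "(INF \<pi>\<in>couplings Q (empirical \<zeta> N). \<integral>\<^sup>+ p. ennreal ((fst p - snd p)^2) \<partial>\<pi>) \<le> ennreal (\<epsilon>^2)"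
      using INF_lower[OF coup, of "\<lambda>\<pi>. \<integral>\<^sup>+ p. ennreal ((fst p - snd p)^2) \<partial>\<pi>"] cost by simp
    then have "enn2real (INF \<pi>\<in>couplings Q (empirical \<zeta> N). \<integral>\<^sup>+ p. ennreal ((fst p - snd p)^2) \<partial>\<pi>) \<le> enn2real (ennreal (\<epsilon>^2))"
      by (rule enn2real_mono) simp
    then have "enn2real (INF \<pi>\<in>couplings Q (empirical \<zeta> N). \<integral>\<^sup>+ p. ennreal ((fst p - snd p)^2) \<partial>\<pi>) \<le> \<epsilon>^2"
      by simp
    then have "W2 Q (empirical \<zeta> N) \<le> sqrt (\<epsilon>^2)" unfolding W2_def by (rule real_sqrt_le_mono)
    then show ?thesis using ep by simp
  qed
  have "(s + r)^2 = (sqrt ((\<Sum>i<N. (\<zeta> i - \<eta>)^2) / N - ((\<Sum>i<N. \<zeta> i) / N - \<eta>)^2)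
                 + sqrt (\<epsilon>^2 - ((\<Sum>i<N. \<zeta> i) / N - \<eta>)^2))^2"
    unfolding s_def r_def vid d2_def ..
  then show ?thesis using QP2 W EQ VQ by metis
qed


theorem theorem5:
  fixes \<zeta> :: "nat \<Rightarrow> real" and N :: nat and \<eta> \<epsilon> :: real
  assumes "N \<ge> 1"
    and "\<epsilon> > 0"
    and "\<epsilon>^2 \<ge> ((\<Sum>i<N. \<zeta> i) / N - \<eta>)^2"
  shows "(SUP Q\<in>{Q\<in>P2. W2 Q (empirical \<zeta> N) \<le> \<epsilon> \<and> (\<integral>x. x \<partial>Q) = \<eta>}.
            ereal (\<integral>x. (x - \<eta>)^2 \<partial>Q))
       = ereal ((sqrt ((\<Sum>i<N. (\<zeta> i - \<eta>)^2) / N - ((\<Sum>i<N. \<zeta> i) / N - \<eta>)^2)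
                 + sqrt (\<epsilon>^2 - ((\<Sum>i<N. \<zeta> i) / N - \<eta>)^2))^2)"
proof (rule antisym)
  show "(SUP Q\<in>{Q\<in>P2. W2 Q (empirical \<zeta> N) \<le> \<epsilon> \<and> (\<integral>x. x \<partial>Q) = \<eta>}.
            ereal (\<integral>x. (x - \<eta>)^2 \<partial>Q))
       \<le> ereal ((sqrt ((\<Sum>i<N. (\<zeta> i - \<eta>)^2) / N - ((\<Sum>i<N. \<zeta> i) / N - \<eta>)^2)
                 + sqrt (\<epsilon>^2 - ((\<Sum>i<N. \<zeta> i) / N - \<eta>)^2))^2)"
  proof (rule SUP_least)
    fix Q assume "Q \<in> {Q\<in>P2. W2 Q (empirical \<zeta> N) \<le> \<epsilon> \<and> (\<integral>x. x \<partial>Q) = \<eta>}"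
    then have "Q \<in> P2" "W2 Q (empirical \<zeta> N) \<le> \<epsilon>" "(\<integral>x. x \<partial>Q) = \<eta>" by auto
    from ub[OF assms this] show "ereal (\<integral>x. (x - \<eta>)^2 \<partial>Q) \<le> ereal ((sqrt ((\<Sum>i<N. (\<zeta> i - \<eta>)^2) / N - ((\<Sum>i<N. \<zeta> i) / N - \<eta>)^2)
                 + sqrt (\<epsilon>^2 - ((\<Sum>i<N. \<zeta> i) / N - \<eta>)^2))^2)" by simp
  qed
  obtain Q where Q: "Q \<in> P2" "W2 Q (empirical \<zeta> N) \<le> \<epsilon>" "(\<integral>x. x \<partial>Q) = \<eta>"
    and V: "(\<integral>x. (x - \<eta>)^2 \<partial>Q) = (sqrt ((\<Sum>i<N. (\<zeta> i - \<eta>)^2) / N - ((\<Sum>i<N. \<zeta> i) / N - \<eta>)^2)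
                 + sqrt (\<epsilon>^2 - ((\<Sum>i<N. \<zeta> i) / N - \<eta>)^2))^2"
    using lb[OF assms] by blast
  show "ereal ((sqrt ((\<Sum>i<N. (\<zeta> i - \<eta>)^2) / N - ((\<Sum>i<N. \<zeta> i) / N - \<eta>)^2)
                 + sqrt (\<epsilon>^2 - ((\<Sum>i<N. \<zeta> i) / N - \<eta>)^2))^2)
     \<le> (SUP Q\<in>{Q\<in>P2. W2 Q (empirical \<zeta> N) \<le> \<epsilon> \<and> (\<integral>x. x \<partial>Q) = \<eta>}.
            ereal (\<integral>x. (x - \<eta>)^2 \<partial>Q))"
    by (rule SUP_upper2[of Q]) (use Q V in auto)
qed

end
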